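(* Let $G=(V,q)$ be a reversible connected graph. Then there exists a perfect coupling graph of $G$.
   Context: A graph $G=(V,q)$ consists of a countable set $V$ and a function $q:V\times V\to[0,\infty)$ such that $\#\{y:q(x,y)>0\}<\infty$ for every $x\in V$; its Laplacian is $\Delta f(x)=\sum_y q(x,y)(f(y)-f(x))$. $G$ is reversible if there is $m:V\to(0,\infty)$ with $q(x,y)m(x)=q(y,x)m(y)$. For reversible $G$, $x\sim y$ means $q(x,y)>0$ and $d$ is the combinatorial graph distance (finite since $G$ is connected). $q_{\min}:=\inf\{q(x,y):q(x,y)>0\}$. $(f\otimes g)(x,y)=f(x)g(y)$. A graph $\widetilde G=(V\times V,\widetilde q)$ with Laplacian $\widetilde\Delta$ is a coupling graph of $G$ if $\widetilde\Delta(f\otimes 1)=\Delta f\otimes 1$ and $\widetilde\Delta(1\otimes f)=1\otimes\Delta f$ for all $f:V\to\mathbb R$. A transport plan from $x_0$ to $y_0$ is $\rho:V\times V\to[0,\infty)$ with $\sum_{y}\rho(x,y)=q(x_0,x)$ for $x\neq x_0$ and $\sum_x\rho(x,y)=q(y_0,y)$ for $y\ne y_0$; $\mathrm{cost}(\rho)=\sum_{x,y}\rho(x,y)(d(x_0,y_0)-d(x,y))$; $\mu_\rho(k)=\sum_{d(x,y)-d(x_0,y_0)=k}\rho(x,y)$; $\rho$ is optimal if it maximizes cost among transport plans from $x_0$ to $y_0$. A coupling graph $\widetilde G$ is perfect if for all $x_0,y_0\in V$ the plan $\rho_{x_0y_0}:=\widetilde q((x_0,y_0),(\cdot,\cdot))$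 is an optimal transport plan from $x_0$ to $y_0$, satisfies $\mu_{\rho_{x_0y_0}}(k)=0$ whenever $|k|>1$, and satisfies $\mu_{\rho_{x_0y_0}}(-1)\ge 2q_{\min}$ whenever $x_0\ne y_0$. *)

theory Defs
  imports "HOL-Analysis.Analysis"
begin

definition is_graph :: "('b \<Rightarrow> 'b \<Rightarrow> real) \<Rightarrow> bool" where
  "is_graph q \<longleftrightarrow> (\<forall>x y. 0 \<le> q x y) \<and> (\<forall>x. finite {y. 0 < q x y})"

definition laplacian :: "('b \<Rightarrow> 'b \<Rightarrow> real) \<Rightarrow> ('b \<Rightarrow> real) \<Rightarrow> 'b \<Rightarrow> real" where
  "laplacian q f x = (\<Sum>y\<in>{y. 0 < q x y}. q x y * (f y - f x))"

definition reversible :: "('b \<Rightarrow> 'b \<Rightarrow> real) \<Rightarrow> bool" where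
  "reversible q \<longleftrightarrow> (\<exists>m::'b \<Rightarrow> real. (\<forall>x. 0 < m x) \<and> (\<forall>x y. q x y * m x = q y x * m y))"

definition adj :: "('b \<Rightarrow> 'b \<Rightarrow> real) \<Rightarrow> 'b \<Rightarrow> 'b \<Rightarrow> bool" where
  "adj q x y \<longleftrightarrow> 0 < q x y"

definition connected_graph :: "('b \<Rightarrow> 'b \<Rightarrow> real) \<Rightarrow> bool" where
  "connected_graph q \<longleftrightarrow> (\<forall>x y. \<exists>n. (adj q ^^ n) x y)"

definition gdist :: "('b \<Rightarrow> 'b \<Rightarrow> real) \<Rightarrow> 'b \<Rightarrow> 'b \<Rightarrow> nat" where
  "gdist q x y = (LEAST n. (adj q ^^ n) x y)"

definition qmin :: "('b \<Rightarrow> 'b \<Rightarrow> real) \<Rightarrow> real" where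
  "qmin q = Inf {q x y | x y. 0 < q x y}"

definition tensor :: "('b \<Rightarrow> real) \<Rightarrow> ('b \<Rightarrow> real) \<Rightarrow> 'b \<times> 'b \<Rightarrow> real" where
  "tensor f g = (\<lambda>(x, y). f x * g y)"

definition coupling_graph ::
  "('b \<Rightarrow> 'b \<Rightarrow> real) \<Rightarrow> ('b \<times> 'b \<Rightarrow> 'b \<times> 'b \<Rightarrow> real) \<Rightarrow> bool" where
  "coupling_graph q qt \<longleftrightarrow> is_graph qt \<and>
     (\<forall>f. laplacian qt (tensor f (\<lambda>_. 1)) = tensor (laplacian q f) (\<lambda>_. 1)) \<and>
     (\<forall>f. laplacian qt (tensor (\<lambda>_. 1) f) = tensor (\<lambda>_. 1) (laplacian q f))"

definition transport_plan ::
  "('b \<Rightarrow> 'b \<Rightarrow> real) \<Rightarrow> 'b \<Rightarrow> 'b \<Rightarrow> ('b \<times> 'b \<Rightarrow> real) \<Rightarrow> bool" where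
  "transport_plan q x0 y0 \<rho> \<longleftrightarrow> (\<forall>p. 0 \<le> \<rho> p) \<and>
     (\<forall>x. x \<noteq> x0 \<longrightarrow> ((\<lambda>y. \<rho> (x, y)) has_sum q x0 x) UNIV) \<and>
     (\<forall>y. y \<noteq> y0 \<longrightarrow> ((\<lambda>x. \<rho> (x, y)) has_sum q y0 y) UNIV)"

definition tp_cost :: "('b \<Rightarrow> 'b \<Rightarrow> real) \<Rightarrow> 'b \<Rightarrow> 'b \<Rightarrow> ('b \<times> 'b \<Rightarrow> real) \<Rightarrow> real" where
  "tp_cost q x0 y0 \<rho> =
     (\<Sum>\<^sub>\<infinity>(x, y). \<rho> (x, y) * (real (gdist q x0 y0) - real (gdist q x y)))"

definition tp_mu :: "('b \<Rightarrow> 'b \<Rightarrow> real) \<Rightarrow> 'b \<Rightarrow> 'b \<Rightarrow> ('b \<times> 'b \<Rightarrow> real) \<Rightarrow> int \<Rightarrow> real" where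
  "tp_mu q x0 y0 \<rho> k =
     (\<Sum>\<^sub>\<infinity>(x, y)\<in>{(x, y). int (gdist q x y) - int (gdist q x0 y0) = k}. \<rho> (x, y))"

definition optimal_plan ::
  "('b \<Rightarrow> 'b \<Rightarrow> real) \<Rightarrow> 'b \<Rightarrow> 'b \<Rightarrow> ('b \<times> 'b \<Rightarrow> real) \<Rightarrow> bool" where
  "optimal_plan q x0 y0 \<rho> \<longleftrightarrow> transport_plan q x0 y0 \<rho> \<and>
     (\<forall>\<rho>'. transport_plan q x0 y0 \<rho>' \<longrightarrow> tp_cost q x0 y0 \<rho>' \<le> tp_cost q x0 y0 \<rho>)"

definition perfect_coupling ::
  "('b \<Rightarrow> 'b \<Rightarrow> real) \<Rightarrow> ('b \<times> 'b \<Rightarrow> 'b \<times> 'b \<Rightarrow> real) \<Rightarrow> bool" where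
  "perfect_coupling q qt \<longleftrightarrow> coupling_graph q qt \<and>
     (\<forall>x0 y0. optimal_plan q x0 y0 (qt (x0, y0)) \<and>
        (\<forall>k. \<bar>k\<bar> > 1 \<longrightarrow> tp_mu q x0 y0 (qt (x0, y0)) k = 0) \<and>
        (x0 \<noteq> y0 \<longrightarrow> tp_mu q x0 y0 (qt (x0, y0)) (-1) \<ge> 2 * qmin q))"

end

theory Submission imports Defs begin

lemma compact_box:
  fixes B :: "'i \<Rightarrow> real"
  shows "compact {f::'i\<Rightarrow>real. \<forall>i. f i \<in> {0..B i}}"
proof -
  have "{f::'i\<Rightarrow>real. \<forall>i. f i \<in> {0..B i}} = PiE UNIV (\<lambda>i. {0..B i})"
    by (auto simp: PiE_def extensional_def)
  moreover have "compactin (product_topology (\<lambda>i. euclidean) UNIV) (PiE UNIV (\<lambda>i. {0..B i::real}))"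
    by (simp add: compactin_PiE)
  ultimately show ?thesis
    by (simp add: euclidean_product_topology)
qed

lemma hs_fin:
  assumes "finite A" "\<And>y. y \<notin> A \<Longrightarrow> f y = 0"
  shows "(f has_sum (sum f A)) UNIV"
  by (rule has_sum_finite_neutralI[of A]) (use assms in auto)

lemma hs_le:
  fixes f :: "'b \<Rightarrow> real"
  assumes "\<And>y. 0 \<le> f y" "(f has_sum s) UNIV"
  shows "f y \<le> s"
proof -
  have "((\<lambda>_. f y) has_sum f y) {y}" by (rule has_sum_finiteI) auto
  from has_sum_mono_neutral[OF this assms(2)] assms(1) show ?thesis by auto
qed

locale GG =
  fixes q :: "'a \<Rightarrow> 'a \<Rightarrow> real"
  assumes isg: "is_graph q" and rev: "reversible q" and conn: "connected_graph q"
begin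

abbreviation "d \<equiv> gdist q"
definition N where "N x = {y. 0 < q x y}"
abbreviation "XX x \<equiv> insert x (N x)"

lemma q_nonneg: "0 \<le> q x y" using isg by (auto simp: is_graph_def)
lemma N_fin: "finite (N x)" using isg by (auto simp: is_graph_def N_def)
lemma XX_fin: "finite (XX x)" using N_fin by simp

lemma notN: "y \<notin> N x \<Longrightarrow> q x y = 0"
  using q_nonneg[of x y] by (auto simp: N_def)

lemma adj_sym: "adj q x y \<Longrightarrow> adj q y x"
proof -
  obtain m where m: "\<forall>x. 0 < m x" "\<forall>x y. q x y * m x = q y x * m y"
    using rev by (auto simp: reversible_def)
  assume "adj q x y"
  hence "0 < q x y * m x" using m by (auto simp: adj_def)
  hence "0 < q y x * m y" using m by metis
  thus "adj q y x" using m(1)[rule_format, of y] q_nonneg[of y x]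
    by (auto simp: adj_def zero_less_mult_iff)
qed

lemma d_path: "(adj q ^^ d x y) x y"
  unfolding gdist_def using conn by (auto simp: connected_graph_def intro: LeastI_ex)

lemma d_le: "(adj q ^^ n) x y \<Longrightarrow> d x y \<le> n"
  unfolding gdist_def by (rule Least_le)

lemma d_tri: "d x z \<le> d x y + d y z"
proof -
  have "(adj q ^^ (d x y + d y z)) x z"
    using d_path[of x y] d_path[of y z] by (auto simp: relpowp_add)
  thus ?thesis by (rule d_le)
qed

lemma d_refl[simp]: "d x x = 0"
  using d_le[of 0 x x] by simp

lemma d_adj: "adj q x y \<Longrightarrow> d x y \<le> 1"
  using d_le[of 1 x y] by (auto simp: OO_def)

lemma d_N: "y \<in> N x \<Longrightarrow> d x y \<le> 1" "y \<in> N x \<Longrightarrow> d y x \<le> 1"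
  using d_adj adj_sym by (auto simp: N_def adj_def)

lemma d_XX: "y \<in> XX x \<Longrightarrow> d x y \<le> 1" "y \<in> XX x \<Longrightarrow> d y x \<le> 1"
  using d_N by auto

end
context GG begin

definition PP where "PP x0 y0 = XX x0 \<times> XX y0"
definition cst where "cst x0 y0 p = real (d x0 y0) - real (d (fst p) (snd p))"
definition F where "F x0 y0 \<rho> = (\<Sum>p\<in>PP x0 y0. \<rho> p * cst x0 y0 p)"
definition fplan where "fplan x0 y0 \<rho> \<longleftrightarrow> (\<forall>p. 0 \<le> \<rho> p) \<and> (\<forall>p. p \<notin> PP x0 y0 \<longrightarrow> \<rho> p = 0) \<and>
  (\<forall>x. x \<noteq> x0 \<longrightarrow> (\<Sum>y\<in>XX y0. \<rho> (x,y)) = q x0 x) \<and>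
  (\<forall>y. y \<noteq> y0 \<longrightarrow> (\<Sum>x\<in>XX x0. \<rho> (x,y)) = q y0 y)"

lemma PP_fin: "finite (PP x0 y0)" by (simp add: PP_def XX_fin N_fin)

lemma fplan_tp: assumes "fplan x0 y0 \<rho>" shows "transport_plan q x0 y0 \<rho>"
  unfolding transport_plan_def
proof (intro conjI allI impI)
  show "0 \<le> \<rho> p" for p using assms unfolding fplan_def by blast
  show "((\<lambda>y. \<rho> (x, y)) has_sum q x0 x) UNIV" if "x \<noteq> x0" for x
    using assms that by (intro has_sum_finite_neutralI[of "XX y0"]) (auto simp: fplan_def PP_def N_fin)
  show "((\<lambda>x. \<rho> (x, y)) has_sum q y0 y) UNIV" if "y \<noteq> y0" for y
    using assms that by (intro has_sum_finite_neutralI[of "XX x0"]) (auto simp: fplan_def PP_def N_fin)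
qed

lemma tp_fplan: assumes tp: "transport_plan q x0 y0 \<rho>" shows "fplan x0 y0 \<rho>"
proof -
  have nn: "\<And>p. 0 \<le> \<rho> p" using tp by (auto simp: transport_plan_def)
  have row: "((\<lambda>y. \<rho> (x, y)) has_sum q x0 x) UNIV" if "x \<noteq> x0" for x
    using tp that by (auto simp: transport_plan_def)
  have col: "((\<lambda>x. \<rho> (x, y)) has_sum q y0 y) UNIV" if "y \<noteq> y0" for y
    using tp that by (auto simp: transport_plan_def)
  have supp: "\<rho> p = 0" if "p \<notin> PP x0 y0" for p
  proof -
    obtain x y where p: "p = (x,y)" by force
    show ?thesis
    proof (cases "x \<in> XX x0")
      case True
      hence "y \<notin> XX y0" using that p by (auto simp: PP_def)
      hence "\<rho> (x,y) \<le> q y0 y" "q y0 y = 0" using hs_le[OF _ col, of y] nn notN by auto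
      thus ?thesis using nn[of p] p by auto
    next
      case False
      hence "\<rho> (x,y) \<le> q x0 x" "q x0 x = 0" using hs_le[OF _ row, of x] nn notN by auto
      thus ?thesis using nn[of p] p by auto
    qed
  qed
  have rs: "(\<Sum>y\<in>XX y0. \<rho> (x,y)) = q x0 x" if "x \<noteq> x0" for x
  proof -
    have "((\<lambda>y. \<rho> (x, y)) has_sum (\<Sum>y\<in>XX y0. \<rho> (x,y))) UNIV"
      by (intro has_sum_finite_neutralI[of "XX y0"]) (use supp in \<open>auto simp: PP_def N_fin\<close>)
    thus ?thesis using row[OF that] has_sum_unique by blast
  qed
  have cs: "(\<Sum>x\<in>XX x0. \<rho> (x,y)) = q y0 y" if "y \<noteq> y0" for y
  proof -
    have "((\<lambda>x. \<rho> (x, y)) has_sum (\<Sum>x\<in>XX x0. \<rho> (x,y))) UNIV"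
      by (intro has_sum_finite_neutralI[of "XX x0"]) (use supp in \<open>auto simp: PP_def N_fin\<close>)
    thus ?thesis using col[OF that] has_sum_unique by blast
  qed
  show ?thesis using nn supp rs cs by (auto simp: fplan_def)
qed

lemma fplan_cost: assumes "fplan x0 y0 \<rho>" shows "tp_cost q x0 y0 \<rho> = F x0 y0 \<rho>"
proof -
  have "tp_cost q x0 y0 \<rho> = infsum (\<lambda>p. \<rho> p * cst x0 y0 p) UNIV"
    unfolding tp_cost_def cst_def by (rule infsum_cong) auto
  also have "\<dots> = infsum (\<lambda>p. \<rho> p * cst x0 y0 p) (PP x0 y0)"
    by (rule infsum_cong_neutral) (use assms in \<open>auto simp: fplan_def\<close>)
  also have "\<dots> = F x0 y0 \<rho>" by (simp add: F_def PP_fin)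
  finally show ?thesis .
qed

lemma fplan_nn: "fplan x0 y0 \<rho> \<Longrightarrow> 0 \<le> \<rho> p" unfolding fplan_def by blast
lemma fplan_supp: "fplan x0 y0 \<rho> \<Longrightarrow> p \<notin> PP x0 y0 \<Longrightarrow> \<rho> p = 0" unfolding fplan_def by blast
lemma fplan_row: "fplan x0 y0 \<rho> \<Longrightarrow> x \<noteq> x0 \<Longrightarrow> (\<Sum>y\<in>XX y0. \<rho> (x,y)) = q x0 x" by (auto simp: fplan_def)
lemma fplan_col: "fplan x0 y0 \<rho> \<Longrightarrow> y \<noteq> y0 \<Longrightarrow> (\<Sum>x\<in>XX x0. \<rho> (x,y)) = q y0 y" by (auto simp: fplan_def)

definition BB where "BB x0 y0 p = (if p \<in> PP x0 y0 then (if fst p \<noteq> x0 then q x0 (fst p) else if snd p \<noteq> y0 then q y0 (snd p) else 0) else 0)"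

definition KK where "KK x0 y0 = {f. \<forall>i. f i \<in> {0..BB x0 y0 i}} \<inter>
   {f. \<forall>x. x \<noteq> x0 \<longrightarrow> (\<Sum>y\<in>XX y0. f (x,y)) = q x0 x} \<inter>
   {f. \<forall>y. y \<noteq> y0 \<longrightarrow> (\<Sum>x\<in>XX x0. f (x,y)) = q y0 y}"

lemma KK_compact: "compact (KK x0 y0)"
  unfolding KK_def
proof (intro compact_Int_closed compact_box)
  show "closed {f. \<forall>x. x \<noteq> x0 \<longrightarrow> (\<Sum>y\<in>XX y0. f (x,y)) = q x0 x}"
    by (intro closed_Collect_all closed_Collect_imp closed_Collect_eq continuous_intros) auto
  show "closed {f. \<forall>y. y \<noteq> y0 \<longrightarrow> (\<Sum>x\<in>XX x0. f (x,y)) = q y0 y}"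
    by (intro closed_Collect_all closed_Collect_imp closed_Collect_eq continuous_intros) auto
qed

lemma KK_fplan: assumes "\<rho> \<in> KK x0 y0" shows "fplan x0 y0 \<rho>"
proof -
  have b: "\<And>i. \<rho> i \<in> {0..BB x0 y0 i}" using assms unfolding KK_def by blast
  have "\<rho> p = 0" if "p \<notin> PP x0 y0" for p
    using b[of p] that by (simp add: BB_def)
  thus ?thesis using assms b unfolding KK_def fplan_def by auto
qed

lemma fplan_KK: assumes f: "fplan x0 y0 \<rho>" and z: "\<rho> (x0,y0) = 0" shows "\<rho> \<in> KK x0 y0"
proof -
  have "\<rho> p \<le> BB x0 y0 p" for p
  proof (cases "p \<in> PP x0 y0")
    case False thus ?thesis using fplan_supp[OF f] by (simp add: BB_def)
  next
    case True
    obtain x y where p: "p = (x,y)" by force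
    show ?thesis
    proof (cases "x \<noteq> x0")
      case True
      have "\<rho> (x,y) \<le> (\<Sum>y\<in>XX y0. \<rho> (x,y))"
        using \<open>p \<in> PP x0 y0\<close> p by (intro member_le_sum) (auto simp: PP_def N_fin fplan_nn[OF f])
      thus ?thesis using True fplan_row[OF f True] p \<open>p \<in> PP x0 y0\<close> by (simp add: BB_def)
    next
      case False
      show ?thesis
      proof (cases "y \<noteq> y0")
        case True
        have "\<rho> (x,y) \<le> (\<Sum>x\<in>XX x0. \<rho> (x,y))"
          using \<open>p \<in> PP x0 y0\<close> p by (intro member_le_sum) (auto simp: PP_def N_fin fplan_nn[OF f])
        thus ?thesis using False True fplan_col[OF f True] p \<open>p \<in> PP x0 y0\<close> by (simp add: BB_def)
      qed (use False p z in \<open>auto simp: BB_def\<close>)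
    qed
  qed
  thus ?thesis using f unfolding KK_def fplan_def by auto
qed

lemma F_upd: "F x0 y0 (\<rho>((x0,y0) := 0)) = F x0 y0 \<rho>"
  unfolding F_def by (rule sum.cong) (auto simp: cst_def)

lemma fplan_upd: "fplan x0 y0 \<rho> \<Longrightarrow> fplan x0 y0 (\<rho>((x0,y0) := 0))"
proof -
  assume f: "fplan x0 y0 \<rho>"
  have r: "(\<Sum>y\<in>XX y0. (\<rho>((x0,y0) := 0)) (x,y)) = (\<Sum>y\<in>XX y0. \<rho> (x,y))" if "x \<noteq> x0" for x
    using that by (intro sum.cong) auto
  have c: "(\<Sum>x\<in>XX x0. (\<rho>((x0,y0) := 0)) (x,y)) = (\<Sum>x\<in>XX x0. \<rho> (x,y))" if "y \<noteq> y0" for y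
    using that by (intro sum.cong) auto
  show ?thesis using f r c unfolding fplan_def by auto
qed

definition rho0 where "rho0 x0 y0 p = (if snd p = y0 \<and> fst p \<noteq> x0 then q x0 (fst p)
   else if fst p = x0 \<and> snd p \<noteq> y0 then q y0 (snd p) else 0)"

lemma rho0_fplan: "fplan x0 y0 (rho0 x0 y0)"
  unfolding fplan_def
proof (intro conjI allI impI)
  show "0 \<le> rho0 x0 y0 p" for p by (auto simp: rho0_def q_nonneg)
  show "rho0 x0 y0 p = 0" if "p \<notin> PP x0 y0" for p
  proof -
    obtain x y where p: "p = (x,y)" by force
    have "x \<notin> XX x0 \<or> y \<notin> XX y0" using that p unfolding PP_def by blast
    thus ?thesis using notN[of x x0] notN[of y y0] unfolding p rho0_def by auto
  qed
  show "(\<Sum>y\<in>XX y0. rho0 x0 y0 (x, y)) = q x0 x" if "x \<noteq> x0" for x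
    using that by (simp add: rho0_def sum.If_cases N_fin)
  show "(\<Sum>x\<in>XX x0. rho0 x0 y0 (x, y)) = q y0 y" if "y \<noteq> y0" for y
    using that by (simp add: rho0_def sum.If_cases N_fin)
qed

lemma exists_opt: "\<exists>\<rho>. fplan x0 y0 \<rho> \<and> (\<forall>\<rho>'. fplan x0 y0 \<rho>' \<longrightarrow> F x0 y0 \<rho>' \<le> F x0 y0 \<rho>)"
proof -
  have ne: "KK x0 y0 \<noteq> {}"
    using fplan_KK[OF rho0_fplan] by (auto simp: rho0_def)
  have "continuous_on (KK x0 y0) (F x0 y0)"
    unfolding F_def by (intro continuous_intros continuous_on_subset[OF continuous_on_product_coordinates]) auto
  from continuous_attains_sup[OF KK_compact ne this] obtain \<rho> where
    r: "\<rho> \<in> KK x0 y0" "\<forall>\<rho>'\<in>KK x0 y0. F x0 y0 \<rho>' \<le> F x0 y0 \<rho>" by blast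
  show ?thesis
  proof (intro exI conjI allI impI)
    show "fplan x0 y0 \<rho>" using KK_fplan r(1) .
    fix \<rho>' assume "fplan x0 y0 \<rho>'"
    hence "\<rho>'((x0,y0):=0) \<in> KK x0 y0" by (intro fplan_KK fplan_upd) auto
    thus "F x0 y0 \<rho>' \<le> F x0 y0 \<rho>" using r(2) F_upd by metis
  qed
qed

end
context GG begin

lemma sum_prod': "(\<Sum>p\<in>A \<times> B. h p) = (\<Sum>x\<in>A. \<Sum>y\<in>B. h (x,y))"
  by (simp add: sum.cartesian_product)

definition sig :: "('a \<Rightarrow> 'a \<Rightarrow> bool) \<Rightarrow> 'a \<Rightarrow> 'a \<Rightarrow> ('a \<times> 'a \<Rightarrow> real) \<Rightarrow> 'a \<times> 'a \<Rightarrow> real" where "sig S x0 y0 \<rho> p = (if S (fst p) (snd p) \<and> fst p \<noteq> x0 \<and> snd p \<noteq> y0 then \<rho> p else 0)"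
definition mv :: "('a \<Rightarrow> 'a \<Rightarrow> bool) \<Rightarrow> 'a \<Rightarrow> 'a \<Rightarrow> ('a \<times> 'a \<Rightarrow> real) \<Rightarrow> 'a \<times> 'a \<Rightarrow> real" where "mv S x0 y0 \<rho> p = \<rho> p - sig S x0 y0 \<rho> p
   + (if snd p = y0 then (\<Sum>y'\<in>XX y0. sig S x0 y0 \<rho> (fst p, y')) else 0)
   + (if fst p = x0 then (\<Sum>x'\<in>XX x0. sig S x0 y0 \<rho> (x', snd p)) else 0)"

lemma mv_xy: "mv S x0 y0 \<rho> (x,y) = \<rho> (x,y) - sig S x0 y0 \<rho> (x,y)
   + (if y = y0 then (\<Sum>y'\<in>XX y0. sig S x0 y0 \<rho> (x, y')) else 0)
   + (if x = x0 then (\<Sum>x'\<in>XX x0. sig S x0 y0 \<rho> (x', y)) else 0)"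
  unfolding mv_def fst_conv snd_conv ..

lemma sum_delta_mult: "finite B \<Longrightarrow> y0 \<in> B \<Longrightarrow> (\<Sum>y\<in>B. (if y = y0 then a else 0) * g y) = a * (g y0::real)"
proof -
  assume "finite B" "y0 \<in> B"
  have "(\<Sum>y\<in>B. (if y = y0 then a else 0) * g y) = (\<Sum>y\<in>B. if y = y0 then a * g y else 0)"
    by (rule sum.cong) auto
  thus ?thesis using \<open>finite B\<close> \<open>y0 \<in> B\<close> by (simp add: sum.delta)
qed

lemma sig_nn: "fplan x0 y0 \<rho> \<Longrightarrow> 0 \<le> sig S x0 y0 \<rho> p"
  using fplan_nn[of x0 y0 \<rho> p] by (auto simp: sig_def)
lemma sig_le': "fplan x0 y0 \<rho> \<Longrightarrow> sig S x0 y0 \<rho> p \<le> \<rho> p"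
  using fplan_nn[of x0 y0 \<rho> p] by (auto simp: sig_def)
lemma sig_supp: "fplan x0 y0 \<rho> \<Longrightarrow> p \<notin> PP x0 y0 \<Longrightarrow> sig S x0 y0 \<rho> p = 0"
  using fplan_supp by (auto simp: sig_def)

lemma mv_fplan: assumes f: "fplan x0 y0 \<rho>" shows "fplan x0 y0 (mv S x0 y0 \<rho>)"
  unfolding fplan_def
proof (intro conjI allI impI)
  fix p
  have "0 \<le> (\<Sum>y'\<in>XX y0. sig S x0 y0 \<rho> (fst p, y'))" "0 \<le> (\<Sum>x'\<in>XX x0. sig S x0 y0 \<rho> (x', snd p))"
    by (auto intro!: sum_nonneg sig_nn[OF f])
  thus "0 \<le> mv S x0 y0 \<rho> p" using sig_le'[OF f, of S p] unfolding mv_def by auto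
next
  fix p assume p: "p \<notin> PP x0 y0"
  obtain x y where xy: "p = (x,y)" by force
  have a: "\<rho> p = 0" "sig S x0 y0 \<rho> p = 0" using p f fplan_supp sig_supp by auto
  have b: "(if y = y0 then (\<Sum>y'\<in>XX y0. sig S x0 y0 \<rho> (x, y')) else 0) = 0"
  proof (cases "y = y0")
    case True
    hence "(x,y') \<notin> PP x0 y0" for y' using p xy by (auto simp: PP_def)
    thus ?thesis using sig_supp[OF f] by simp
  qed simp
  have c: "(if x = x0 then (\<Sum>x'\<in>XX x0. sig S x0 y0 \<rho> (x', y)) else 0) = 0"
  proof (cases "x = x0")
    case True
    hence "(x',y) \<notin> PP x0 y0" for x' using p xy by (auto simp: PP_def)
    thus ?thesis using sig_supp[OF f] by simp
  qed simp
  show "mv S x0 y0 \<rho> p = 0" using a[unfolded xy] b c unfolding mv_def xy fst_conv snd_conv by linarith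
next
  fix x assume x: "x \<noteq> x0"
  have "(\<Sum>y\<in>XX y0. mv S x0 y0 \<rho> (x, y)) = (\<Sum>y\<in>XX y0. \<rho> (x,y)) - (\<Sum>y\<in>XX y0. sig S x0 y0 \<rho> (x,y))
     + (\<Sum>y\<in>XX y0. if y = y0 then (\<Sum>y'\<in>XX y0. sig S x0 y0 \<rho> (x, y')) else 0)"
    using x by (simp add: mv_xy sum.distrib sum_subtractf)
  also have "\<dots> = (\<Sum>y\<in>XX y0. \<rho> (x,y))" by (simp add: sum.delta N_fin)
  finally show "(\<Sum>y\<in>XX y0. mv S x0 y0 \<rho> (x, y)) = q x0 x" using fplan_row[OF f x] by simp
next
  fix y assume y: "y \<noteq> y0"
  have "(\<Sum>x\<in>XX x0. mv S x0 y0 \<rho> (x, y)) = (\<Sum>x\<in>XX x0. \<rho> (x,y)) - (\<Sum>x\<in>XX x0. sig S x0 y0 \<rho> (x,y))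
     + (\<Sum>x\<in>XX x0. if x = x0 then (\<Sum>x'\<in>XX x0. sig S x0 y0 \<rho> (x', y)) else 0)"
    using y by (simp add: mv_xy sum.distrib sum_subtractf)
  also have "\<dots> = (\<Sum>x\<in>XX x0. \<rho> (x,y))" by (simp add: sum.delta N_fin)
  finally show "(\<Sum>x\<in>XX x0. mv S x0 y0 \<rho> (x, y)) = q y0 y" using fplan_col[OF f y] by simp
qed

lemma mv_F: "F x0 y0 (mv S x0 y0 \<rho>) = F x0 y0 \<rho> +
   (\<Sum>p\<in>PP x0 y0. sig S x0 y0 \<rho> p * (cst x0 y0 (fst p, y0) + cst x0 y0 (x0, snd p) - cst x0 y0 p))"
proof -
  let ?s = "sig S x0 y0 \<rho>" and ?c = "cst x0 y0"
  have fX: "finite (XX x0)" "finite (XX y0)" by (auto simp: N_fin)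
  have 1: "F x0 y0 (mv S x0 y0 \<rho>) = F x0 y0 \<rho> - (\<Sum>p\<in>PP x0 y0. ?s p * ?c p)
     + (\<Sum>p\<in>PP x0 y0. (if snd p = y0 then (\<Sum>y'\<in>XX y0. ?s (fst p, y')) else 0) * ?c p)
     + (\<Sum>p\<in>PP x0 y0. (if fst p = x0 then (\<Sum>x'\<in>XX x0. ?s (x', snd p)) else 0) * ?c p)"
    unfolding F_def mv_def by (simp add: algebra_simps sum.distrib sum_subtractf)
  have 2: "(\<Sum>p\<in>PP x0 y0. (if snd p = y0 then (\<Sum>y'\<in>XX y0. ?s (fst p, y')) else 0) * ?c p)
     = (\<Sum>p\<in>PP x0 y0. ?s p * ?c (fst p, y0))"
  proof -
    have "(\<Sum>p\<in>PP x0 y0. (if snd p = y0 then (\<Sum>y'\<in>XX y0. ?s (fst p, y')) else 0) * ?c p)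
      = (\<Sum>x\<in>XX x0. \<Sum>y\<in>XX y0. (if y = y0 then (\<Sum>y'\<in>XX y0. ?s (x, y')) else 0) * ?c (x,y))"
      unfolding PP_def sum_prod' by (simp cong: if_cong)
    also have "\<dots> = (\<Sum>x\<in>XX x0. (\<Sum>y'\<in>XX y0. ?s (x, y')) * ?c (x,y0))"
      by (rule sum.cong[OF refl], rule sum_delta_mult) (auto simp: N_fin)
    also have "\<dots> = (\<Sum>x\<in>XX x0. \<Sum>y'\<in>XX y0. ?s (x, y') * ?c (x,y0))"
      by (simp add: sum_distrib_right)
    also have "\<dots> = (\<Sum>p\<in>PP x0 y0. ?s p * ?c (fst p, y0))"
      unfolding PP_def sum_prod' by (simp cong: if_cong)
    finally show ?thesis .
  qed
  have 3: "(\<Sum>p\<in>PP x0 y0. (if fst p = x0 then (\<Sum>x'\<in>XX x0. ?s (x', snd p)) else 0) * ?c p)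
     = (\<Sum>p\<in>PP x0 y0. ?s p * ?c (x0, snd p))"
  proof -
    have "(\<Sum>p\<in>PP x0 y0. (if fst p = x0 then (\<Sum>x'\<in>XX x0. ?s (x', snd p)) else 0) * ?c p)
      = (\<Sum>y\<in>XX y0. \<Sum>x\<in>XX x0. (if x = x0 then (\<Sum>x'\<in>XX x0. ?s (x', y)) else 0) * ?c (x,y))"
      unfolding PP_def sum_prod' by (subst sum.swap) (simp cong: if_cong)
    also have "\<dots> = (\<Sum>y\<in>XX y0. (\<Sum>x'\<in>XX x0. ?s (x', y)) * ?c (x0,y))"
      by (rule sum.cong[OF refl], rule sum_delta_mult) (auto simp: N_fin)
    also have "\<dots> = (\<Sum>y\<in>XX y0. \<Sum>x'\<in>XX x0. ?s (x', y) * ?c (x0,y))"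
      by (simp add: sum_distrib_right)
    also have "\<dots> = (\<Sum>p\<in>PP x0 y0. ?s p * ?c (x0, snd p))"
      unfolding PP_def sum_prod' by (subst sum.swap) (simp cong: if_cong)
    finally show ?thesis .
  qed
  show ?thesis unfolding 1 2 3 by (simp add: algebra_simps sum.distrib sum_subtractf)
qed

lemma mv_F_ge:
  assumes f: "fplan x0 y0 \<rho>"
    and hS: "\<And>x y. S x y \<Longrightarrow> x \<in> N x0 \<Longrightarrow> y \<in> N y0 \<Longrightarrow> x \<noteq> x0 \<Longrightarrow> y \<noteq> y0 \<Longrightarrow>
          d x y0 + d x0 y \<le> d x y + d x0 y0"
  shows "F x0 y0 \<rho> \<le> F x0 y0 (mv S x0 y0 \<rho>)"
proof -
  have "0 \<le> sig S x0 y0 \<rho> p * (cst x0 y0 (fst p, y0) + cst x0 y0 (x0, snd p) - cst x0 y0 p)"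
    if p: "p \<in> PP x0 y0" for p
  proof (cases "S (fst p) (snd p) \<and> fst p \<noteq> x0 \<and> snd p \<noteq> y0")
    case True
    hence "fst p \<in> N x0" "snd p \<in> N y0" using p by (auto simp: PP_def)
    hence "d (fst p) y0 + d x0 (snd p) \<le> d (fst p) (snd p) + d x0 y0" using hS True by auto
    hence "0 \<le> cst x0 y0 (fst p, y0) + cst x0 y0 (x0, snd p) - cst x0 y0 p"
      unfolding cst_def by simp
    thus ?thesis using sig_nn[OF f] by simp
  next
    case False thus ?thesis unfolding sig_def by (subst if_not_P[OF False]) simp
  qed
  hence "0 \<le> (\<Sum>p\<in>PP x0 y0. sig S x0 y0 \<rho> p * (cst x0 y0 (fst p, y0) + cst x0 y0 (x0, snd p) - cst x0 y0 p))"
    by (intro sum_nonneg) auto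
  thus ?thesis unfolding mv_F by simp
qed

lemma mv_zero: "x \<noteq> x0 \<Longrightarrow> y \<noteq> y0 \<Longrightarrow> S x y \<Longrightarrow> mv S x0 y0 \<rho> (x,y) = 0"
  by (auto simp: mv_def sig_def)

lemma row_conc: assumes f: "fplan x0 y0 \<rho>" and x: "x \<noteq> x0" and z: "\<And>y. y \<noteq> y0 \<Longrightarrow> \<rho> (x,y) = 0"
  shows "\<rho> (x,y0) = q x0 x"
proof -
  have "(\<Sum>y\<in>XX y0. \<rho> (x,y)) = \<rho> (x,y0)"
    using z by (simp add: sum.remove[OF XX_fin, of y0] sum.neutral)
  thus ?thesis using fplan_row[OF f x] by simp
qed

lemma col_conc: assumes f: "fplan x0 y0 \<rho>" and y: "y \<noteq> y0" and z: "\<And>x. x \<noteq> x0 \<Longrightarrow> \<rho> (x,y) = 0"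
  shows "\<rho> (x0,y) = q y0 y"
proof -
  have "(\<Sum>x\<in>XX x0. \<rho> (x,y)) = \<rho> (x0,y)"
    using z by (simp add: sum.remove[OF XX_fin, of x0] sum.neutral)
  thus ?thesis using fplan_col[OF f y] by simp
qed

end
context GG begin

lemma d_zero: "d x y = 0 \<Longrightarrow> x = y"
  using d_path[of x y] by (auto elim: relpowp_0_E)

lemma geo_x1: assumes "x0 \<noteq> y0"
  shows "\<exists>x1. 0 < q x0 x1 \<and> d x1 y0 + 1 = d x0 y0"
proof -
  obtain k where k: "d x0 y0 = Suc k" using assms d_zero by (cases "d x0 y0") auto
  have "(adj q ^^ Suc k) x0 y0" using d_path[of x0 y0] k by simp
  then obtain x1 where x1: "adj q x0 x1" "(adj q ^^ k) x1 y0" using relpowp_Suc_D2 by metis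
  have "d x1 y0 \<le> k" using d_le[OF x1(2)] .
  moreover have "d x0 y0 \<le> d x0 x1 + d x1 y0" by (rule d_tri)
  moreover have "d x0 x1 \<le> 1" using d_adj[OF x1(1)] .
  ultimately have "d x1 y0 + 1 = d x0 y0" using k by linarith
  thus ?thesis using x1(1) by (auto simp: adj_def)
qed

lemma geo_y1: assumes "x0 \<noteq> y0"
  shows "\<exists>y1. 0 < q y0 y1 \<and> d x0 y1 + 1 = d x0 y0"
proof -
  obtain k where k: "d x0 y0 = Suc k" using assms d_zero by (cases "d x0 y0") auto
  have "(adj q ^^ Suc k) x0 y0" using d_path[of x0 y0] k by simp
  then obtain y1 where y1: "(adj q ^^ k) x0 y1" "adj q y1 y0" by (auto elim: relpowp_Suc_E)
  have "d x0 y1 \<le> k" using d_le[OF y1(1)] .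
  moreover have "d x0 y0 \<le> d x0 y1 + d y1 y0" by (rule d_tri)
  moreover have "d y1 y0 \<le> 1" using d_adj[OF y1(2)] .
  ultimately have "d x0 y1 + 1 = d x0 y0" using k by linarith
  thus ?thesis using adj_sym[OF y1(2)] by (auto simp: adj_def)
qed

definition good where "good x0 y0 \<rho> \<longleftrightarrow> fplan x0 y0 \<rho> \<and> (\<forall>\<rho>'. fplan x0 y0 \<rho>' \<longrightarrow> F x0 y0 \<rho>' \<le> F x0 y0 \<rho>) \<and>
  (\<forall>p. \<rho> p \<noteq> 0 \<longrightarrow> d (fst p) (snd p) \<le> d x0 y0 + 1 \<and> d x0 y0 \<le> d (fst p) (snd p) + 1) \<and>
  (x0 \<noteq> y0 \<longrightarrow> (\<exists>x1 y1. x1 \<noteq> x0 \<and> \<rho> (x1,y0) = q x0 x1 \<and> \<rho> (x0,y1) = q y0 y1 \<and> 0 < q x0 x1 \<and> 0 < q y0 y1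
      \<and> d x1 y0 + 1 = d x0 y0 \<and> d x0 y1 + 1 = d x0 y0))"

lemma exists_good: "\<exists>\<rho>. good x0 y0 \<rho>"
proof -
  define D where "D = d x0 y0"
  obtain \<rho>o where o: "fplan x0 y0 \<rho>o" "\<And>\<rho>'. fplan x0 y0 \<rho>' \<Longrightarrow> F x0 y0 \<rho>' \<le> F x0 y0 \<rho>o"
    using exists_opt by blast
  obtain x1 y1 where xy1: "x0 \<noteq> y0 \<Longrightarrow> 0 < q x0 x1 \<and> d x1 y0 + 1 = D"
     "x0 \<noteq> y0 \<Longrightarrow> 0 < q y0 y1 \<and> d x0 y1 + 1 = D"
    using geo_x1 geo_y1 unfolding D_def by metis
  define S where "S x y \<longleftrightarrow> d x y + 2 = D \<or> d x y = D + 2 \<or> (x0 \<noteq> y0 \<and> (x = x1 \<or> y = y1))" for x y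
  have hS: "d x y0 + d x0 y \<le> d x y + d x0 y0"
    if "S x y" "x \<in> N x0" "y \<in> N y0" "x \<noteq> x0" "y \<noteq> y0" for x y
  proof -
    have b: "d x0 x \<le> 1" "d x x0 \<le> 1" "d y0 y \<le> 1" "d y y0 \<le> 1" using d_N that by auto
    have t: "d x y0 \<le> d x y + d y y0" "d x0 y \<le> d x0 x + d x y" "d x y0 \<le> d x x0 + d x0 y0"
      "d x0 y \<le> d x0 y0 + d y0 y" "d x0 y \<le> d x0 x1 + d x1 y" "d x y0 \<le> d x y1 + d y1 y0"
      by (rule d_tri)+
    show ?thesis
    proof (cases "x0 \<noteq> y0 \<and> (x = x1 \<or> y = y1)")
      case True
      hence "d x0 x1 \<le> 1" "d y1 y0 \<le> 1" using xy1 d_N[of x1 x0] d_N[of y1 y0] by (auto simp: N_def)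
      thus ?thesis using True xy1 t b unfolding D_def by auto
    next
      case False
      thus ?thesis using that(1) t b unfolding S_def D_def by auto
    qed
  qed
  define \<rho> where "\<rho> = mv S x0 y0 \<rho>o"
  have f: "fplan x0 y0 \<rho>" unfolding \<rho>_def by (rule mv_fplan[OF o(1)])
  have opt: "F x0 y0 \<rho>' \<le> F x0 y0 \<rho>" if "fplan x0 y0 \<rho>'" for \<rho>'
    using o(2)[OF that] mv_F_ge[OF o(1), of S, OF hS] unfolding \<rho>_def by fastforce
  have z: "\<rho> (x,y) = 0" if "x \<noteq> x0" "y \<noteq> y0" "S x y" for x y
    unfolding \<rho>_def using mv_zero that by blast
  have bnd: "d (fst p) (snd p) \<le> D + 1 \<and> D \<le> d (fst p) (snd p) + 1" if "\<rho> p \<noteq> 0" for p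
  proof -
    obtain x y where p: "p = (x,y)" by force
    have P: "x \<in> XX x0" "y \<in> XX y0" using fplan_supp[OF f, of p] that p by (auto simp: PP_def)
    have b: "d x0 x \<le> 1" "d x x0 \<le> 1" "d y0 y \<le> 1" "d y y0 \<le> 1" using d_XX P by auto
    have t: "d x y \<le> d x x0 + d x0 y" "d x0 y \<le> d x0 y0 + d y0 y"
       "d x0 y0 \<le> d x0 x + d x y0" "d x y0 \<le> d x y + d y y0" by (rule d_tri)+
    show ?thesis
    proof (cases "x \<noteq> x0 \<and> y \<noteq> y0")
      case True
      hence "\<not> S x y" using z that p by auto
      hence "d x y + 2 \<noteq> D" "d x y \<noteq> D + 2" unfolding S_def by auto
      thus ?thesis using t b p unfolding D_def by auto
    next
      case False
      thus ?thesis using t b p unfolding D_def by auto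
    qed
  qed
  have ex: "\<exists>x1 y1. x1 \<noteq> x0 \<and> \<rho> (x1,y0) = q x0 x1 \<and> \<rho> (x0,y1) = q y0 y1 \<and> 0 < q x0 x1 \<and> 0 < q y0 y1
      \<and> d x1 y0 + 1 = d x0 y0 \<and> d x0 y1 + 1 = d x0 y0" if ne: "x0 \<noteq> y0"
  proof (intro exI conjI)
    show x10: "x1 \<noteq> x0" using xy1(1)[OF ne] unfolding D_def by auto
    show "\<rho> (x1,y0) = q x0 x1"
    proof (rule row_conc[OF f x10])
      fix y assume "y \<noteq> y0" thus "\<rho> (x1,y) = 0" using z[OF x10] ne unfolding S_def by blast
    qed
    have y10: "y1 \<noteq> y0" using xy1(2)[OF ne] unfolding D_def by auto
    show "\<rho> (x0,y1) = q y0 y1"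
    proof (rule col_conc[OF f y10])
      fix x assume "x \<noteq> x0" thus "\<rho> (x,y1) = 0" using z[OF _ y10] ne unfolding S_def by blast
    qed
  qed (use xy1 ne D_def in auto)
  show ?thesis unfolding good_def using f opt bnd ex unfolding D_def by blast
qed

end
context GG begin

lemma sum_pos_PP: assumes f: "fplan x0 y0 \<rho>"
  shows "(\<Sum>p\<in>{p. 0 < \<rho> p}. \<rho> p * h p) = (\<Sum>p\<in>PP x0 y0. \<rho> p * h p)"
proof (rule sum.mono_neutral_left[OF PP_fin])
  show "{p. 0 < \<rho> p} \<subseteq> PP x0 y0" using fplan_supp[OF f] by force
  show "\<forall>i\<in>PP x0 y0 - {p. 0 < \<rho> p}. \<rho> i * h i = 0"
    using fplan_nn[OF f] by (auto simp: order_le_less)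
qed

lemma lap_row: assumes f: "fplan x0 y0 \<rho>"
  shows "(\<Sum>p\<in>{p. 0 < \<rho> p}. \<rho> p * (g (fst p) - g x0)) = laplacian q g x0"
proof -
  have "(\<Sum>p\<in>{p. 0 < \<rho> p}. \<rho> p * (g (fst p) - g x0)) = (\<Sum>x\<in>XX x0. \<Sum>y\<in>XX y0. \<rho> (x,y) * (g x - g x0))"
    unfolding sum_pos_PP[OF f] PP_def sum_prod' by simp
  also have "\<dots> = (\<Sum>x\<in>XX x0. q x0 x * (g x - g x0))"
  proof (rule sum.cong[OF refl])
    fix x assume "x \<in> XX x0"
    have "(\<Sum>y\<in>XX y0. \<rho> (x,y) * (g x - g x0)) = (\<Sum>y\<in>XX y0. \<rho> (x,y)) * (g x - g x0)"
      by (simp add: sum_distrib_right)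
    thus "(\<Sum>y\<in>XX y0. \<rho> (x,y) * (g x - g x0)) = q x0 x * (g x - g x0)"
      using fplan_row[OF f, of x] by (cases "x = x0") auto
  qed
  also have "\<dots> = (\<Sum>x\<in>N x0. q x0 x * (g x - g x0))"
    by (simp add: sum.insert_if N_fin)
  finally show ?thesis unfolding laplacian_def N_def .
qed

lemma lap_col: assumes f: "fplan x0 y0 \<rho>"
  shows "(\<Sum>p\<in>{p. 0 < \<rho> p}. \<rho> p * (g (snd p) - g y0)) = laplacian q g y0"
proof -
  have "(\<Sum>p\<in>{p. 0 < \<rho> p}. \<rho> p * (g (snd p) - g y0)) = (\<Sum>y\<in>XX y0. \<Sum>x\<in>XX x0. \<rho> (x,y) * (g y - g y0))"
    unfolding sum_pos_PP[OF f] PP_def sum_prod' by (subst sum.swap) simp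
  also have "\<dots> = (\<Sum>y\<in>XX y0. q y0 y * (g y - g y0))"
  proof (rule sum.cong[OF refl])
    fix y assume "y \<in> XX y0"
    have "(\<Sum>x\<in>XX x0. \<rho> (x,y) * (g y - g y0)) = (\<Sum>x\<in>XX x0. \<rho> (x,y)) * (g y - g y0)"
      by (simp add: sum_distrib_right)
    thus "(\<Sum>x\<in>XX x0. \<rho> (x,y) * (g y - g y0)) = q y0 y * (g y - g y0)"
      using fplan_col[OF f, of y] by (cases "y = y0") auto
  qed
  also have "\<dots> = (\<Sum>y\<in>N y0. q y0 y * (g y - g y0))"
    by (simp add: sum.insert_if N_fin)
  finally show ?thesis unfolding laplacian_def N_def .
qed

lemma mu_eq: "tp_mu q x0 y0 \<rho> k = infsum \<rho> {(x, y). int (d x y) - int (d x0 y0) = k}"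
  unfolding tp_mu_def by simp

lemma perfect: "\<exists>qt. perfect_coupling q qt"
proof -
  define qt where "qt = (\<lambda>p. SOME \<rho>. good (fst p) (snd p) \<rho>)"
  have G: "good x0 y0 (qt (x0,y0))" for x0 y0
    unfolding qt_def using exists_good[of x0 y0] by (simp add: someI_ex)
  have F: "fplan x0 y0 (qt (x0,y0))" for x0 y0 using G[of x0 y0] by (simp add: good_def)
  have t1: "tensor f (\<lambda>_. 1) = (\<lambda>p. f (fst p))" for f :: "'a \<Rightarrow> real" by (auto simp: tensor_def)
  have t2: "tensor (\<lambda>_. 1) f = (\<lambda>p. f (snd p))" for f :: "'a \<Rightarrow> real" by (auto simp: tensor_def)
  have cg: "coupling_graph q qt"
    unfolding coupling_graph_def
  proof (intro conjI allI)
    show "is_graph qt"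
      unfolding is_graph_def
    proof (intro conjI allI)
      fix p p' :: "'a \<times> 'a"
      obtain x0 y0 where p: "p = (x0,y0)" by force
      show "0 \<le> qt p p'" using fplan_nn[OF F[of x0 y0]] p by simp
      have "{p'. 0 < qt p p'} \<subseteq> PP x0 y0" using fplan_supp[OF F[of x0 y0]] p by force
      thus "finite {p'. 0 < qt p p'}" using PP_fin finite_subset by blast
    qed
    fix f :: "'a \<Rightarrow> real"
    show "laplacian qt (tensor f (\<lambda>_. 1)) = tensor (laplacian q f) (\<lambda>_. 1)"
    proof
      fix p :: "'a \<times> 'a"
      obtain x0 y0 where p: "p = (x0,y0)" by force
      show "laplacian qt (tensor f (\<lambda>_. 1)) p = tensor (laplacian q f) (\<lambda>_. 1) p"
        unfolding t1 p laplacian_def[of qt] using lap_row[OF F[of x0 y0], of f]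
        by (simp add: tensor_def laplacian_def)
    qed
    show "laplacian qt (tensor (\<lambda>_. 1) f) = tensor (\<lambda>_. 1) (laplacian q f)"
    proof
      fix p :: "'a \<times> 'a"
      obtain x0 y0 where p: "p = (x0,y0)" by force
      show "laplacian qt (tensor (\<lambda>_. 1) f) p = tensor (\<lambda>_. 1) (laplacian q f) p"
        unfolding t2 p laplacian_def[of qt] using lap_col[OF F[of x0 y0], of f]
        by (simp add: tensor_def laplacian_def)
    qed
  qed
  have rest: "optimal_plan q x0 y0 (qt (x0, y0)) \<and>
        (\<forall>k. \<bar>k\<bar> > 1 \<longrightarrow> tp_mu q x0 y0 (qt (x0, y0)) k = 0) \<and>
        (x0 \<noteq> y0 \<longrightarrow> tp_mu q x0 y0 (qt (x0, y0)) (-1) \<ge> 2 * qmin q)" for x0 y0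
  proof (intro conjI allI impI)
    let ?r = "qt (x0,y0)"
    have g: "good x0 y0 ?r" by (rule G)
    show "optimal_plan q x0 y0 ?r"
      unfolding optimal_plan_def
    proof (intro conjI allI impI)
      show "transport_plan q x0 y0 ?r" using fplan_tp[OF F] .
      fix \<rho>' assume "transport_plan q x0 y0 \<rho>'"
      hence "fplan x0 y0 \<rho>'" by (rule tp_fplan)
      thus "tp_cost q x0 y0 \<rho>' \<le> tp_cost q x0 y0 ?r"
        using g fplan_cost[OF F[of x0 y0]] fplan_cost[of x0 y0 \<rho>'] by (auto simp: good_def)
    qed
    fix k :: int assume k: "\<bar>k\<bar> > 1"
    show "tp_mu q x0 y0 ?r k = 0" unfolding mu_eq
    proof (rule infsum_0)
      fix p assume "p \<in> {(x, y). int (d x y) - int (d x0 y0) = k}"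
      hence "int (d (fst p) (snd p)) - int (d x0 y0) = k" by auto
      hence kk: "int (d (fst p) (snd p)) - int (d x0 y0) = k" .
      show "?r p = 0"
      proof (rule ccontr)
        assume "?r p \<noteq> 0"
        hence "d (fst p) (snd p) \<le> d x0 y0 + 1 \<and> d x0 y0 \<le> d (fst p) (snd p) + 1"
          using g unfolding good_def by blast
        thus False using kk k by linarith
      qed
    qed
  next
    let ?r = "qt (x0,y0)"
    have g: "good x0 y0 ?r" by (rule G)
    assume ne: "x0 \<noteq> y0"
    then obtain x1 y1 where h: "x1 \<noteq> x0" "?r (x1,y0) = q x0 x1" "?r (x0,y1) = q y0 y1" "0 < q x0 x1" "0 < q y0 y1"
       "d x1 y0 + 1 = d x0 y0" "d x0 y1 + 1 = d x0 y0" using g unfolding good_def by blast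
    let ?T = "{(x, y). int (d x y) - int (d x0 y0) = -1}"
    have bdd: "bdd_below {q x y | x y. 0 < q x y}" by (rule bdd_belowI[of _ 0]) auto
    have m1: "qmin q \<le> q x0 x1" unfolding qmin_def by (rule cInf_lower[OF _ bdd]) (use h in auto)
    have m2: "qmin q \<le> q y0 y1" unfolding qmin_def by (rule cInf_lower[OF _ bdd]) (use h in auto)
    have "infsum ?r ?T = infsum ?r (?T \<inter> PP x0 y0)"
      by (rule infsum_cong_neutral) (use fplan_supp[OF F[of x0 y0]] in auto)
    also have "\<dots> = sum ?r (?T \<inter> PP x0 y0)" using PP_fin by simp
    also have "\<dots> \<ge> sum ?r {(x1,y0),(x0,y1)}"
    proof (rule sum_mono2)
      show "finite (?T \<inter> PP x0 y0)" using PP_fin by simp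
      show "{(x1,y0),(x0,y1)} \<subseteq> ?T \<inter> PP x0 y0"
        using h by (auto simp: PP_def N_def)
      show "\<And>b. b \<in> ?T \<inter> PP x0 y0 - {(x1,y0),(x0,y1)} \<Longrightarrow> 0 \<le> ?r b"
        using fplan_nn[OF F[of x0 y0]] by blast
    qed
    finally have "sum ?r {(x1,y0),(x0,y1)} \<le> infsum ?r ?T" .
    moreover have "sum ?r {(x1,y0),(x0,y1)} = q x0 x1 + q y0 y1" using h by simp
    ultimately show "tp_mu q x0 y0 ?r (-1) \<ge> 2 * qmin q" unfolding mu_eq using m1 m2 by linarith
  qed
  have "perfect_coupling q qt" unfolding perfect_coupling_def using cg rest by blast
  thus ?thesis by blast
qed

end

theorem mainTheorem3:
  fixes q :: "'a::countable \<Rightarrow> 'a \<Rightarrow> real"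
  assumes "is_graph q" and "reversible q" and "connected_graph q"
  shows "\<exists>qt. perfect_coupling q qt"
proof -
  interpret GG q using assms by unfold_locales
  show ?thesis by (rule perfect)
qed

end
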